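(* Let $d\ge2$, $s\in\{2,3,\dots\}$ and $n\in\mathbb N_0$. Let $\mathcal U_n^d(\mathsf w_{-1,-s})$ be the linear span of $$\mathcal H_n^{d,0}\ \cup\ \bigcup_{j=1}^{\min(s-1,n)}P_j^{(2n-2j+d-2,-s)}(1-2t)\,\mathcal H_{n-j}^{d,0}\ \cup\ (1-t)^s\,\mathcal V_{n-s}^d(\mathsf w_{-1,s})$$ (the last set being $\{0\}$ if $n<s$). Then every $Z\in\mathcal U_n^d(\mathsf w_{-1,-s})$ satisfies $\mathcal D_{-s}Z=\lambda_n^{(-s)}Z$ with $\lambda_n^{(-s)}=-n(n-s+d-1)$.
   Context: Cone points $(x,t)=(t\xi,t)$, $\xi\in\mathbb S^{d-1}$. $\mathcal D_\gamma=t(1-t)\frac{\partial^2}{\partial t^2}+\big(d-1-(d+\gamma)t\big)\frac{\partial}{\partial t}+t^{-1}\Delta_0^{(\xi)}$, acting on functions of $(t,\xi)$, $t$-derivatives at fixed $\xi$, $\Delta_0^{(\xi)}$ the Laplace–Beltrami operator on $\mathbb S^{d-1}$. $\mathcal H_m^{d,0}$: homogeneous harmonic polynomials of degree $m$ on $\mathbb R^d$ (so $Y(t\xi)=t^mY(\xi)$), with basis $\{Y_\ell^m\}$. Jacobi polynomials for arbitrary real parameters: $P_j^{(\alpha,\beta)}(u)=\sum_{k=0}^j\frac{(\alpha+k+1)_{j-k}(-j)_k(j+\alpha+\beta+1)_k}{j!\,k!}(\frac{1-u}{2})^k$, $(a)_k$ the Pochhammer symbol. $P_j^{(2n-2j+d-2,-s)}(1-2t)\mathcal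 H_{n-j}^{d,0}$ denotes $\{P_j^{(2n-2j+d-2,-s)}(1-2t)Y(x):Y\in\mathcal H_{n-j}^{d,0}\}$. $\mathcal V_k^d(\mathsf w_{-1,s})$ is the span of $\{P_{k-m}^{(2m+d-2,s)}(1-2t)Y_\ell^m(x):0\le m\le k,\ \ell\}$, the orthogonal polynomials of degree $k$ on the cone for the weight $t^{-1}(1-t)^s$; all spaces are regarded as spaces of functions on the cone. *)

theory Defs
  imports "HOL-Analysis.Analysis"
begin

definition jacobiP :: "nat \<Rightarrow> real \<Rightarrow> real \<Rightarrow> real \<Rightarrow> real" where
  "jacobiP j a b u = (\<Sum>k=0..j.
      pochhammer (a + real k + 1) (j - k) * pochhammer (- real j) k
      * pochhammer (real j + a + b + 1) k / (fact j * fact k) * ((1 - u) / 2) ^ k)"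

definition laplacian :: "(real^'n \<Rightarrow> real) \<Rightarrow> real^'n \<Rightarrow> real" where
  "laplacian h x = (\<Sum>i\<in>UNIV. deriv (deriv (\<lambda>r. h (x + r *\<^sub>R axis i 1))) 0)"

text \<open>Laplace--Beltrami operator on the unit sphere: Laplacian of the
  degree-0 homogeneous extension, evaluated on the sphere.\<close>
definition sphere_LB :: "(real^'n \<Rightarrow> real) \<Rightarrow> real^'n \<Rightarrow> real" where
  "sphere_LB g \<xi> = laplacian (\<lambda>x. g ((1 / norm x) *\<^sub>R x)) \<xi>"

definition hom_poly :: "nat \<Rightarrow> (real^'n \<Rightarrow> real) \<Rightarrow> bool" where
  "hom_poly m Y \<longleftrightarrow> (\<exists>A c. finite A \<and> (\<forall>\<alpha>\<in>A. (\<Sum>i\<in>UNIV. \<alpha> i) = m) \<and>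
      Y = (\<lambda>x. \<Sum>\<alpha>\<in>A. c \<alpha> * (\<Prod>i\<in>UNIV. (x $ i) ^ (\<alpha> i))))"

definition harm :: "nat \<Rightarrow> (real^'n \<Rightarrow> real) set" where
  "harm m = {Y. hom_poly m Y \<and> (\<forall>x. laplacian Y x = 0)}"

definition lin_span :: "(real^'n \<Rightarrow> real \<Rightarrow> real) set \<Rightarrow> (real^'n \<Rightarrow> real \<Rightarrow> real) set" where
  "lin_span S = {f. \<exists>A c. finite A \<and> A \<subseteq> S \<and> f = (\<lambda>x t. \<Sum>g\<in>A. c g * g x t)}"

definition Vspace :: "nat \<Rightarrow> real \<Rightarrow> (real^'n \<Rightarrow> real \<Rightarrow> real) set" where
  "Vspace k s = lin_span (\<Union>m\<in>{0..k}.
      {(\<lambda>x t. jacobiP (k - m) (2 * real m + real CARD('n) - 2) s (1 - 2 * t) * Y x) | Y.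
         Y \<in> (harm m :: (real^'n \<Rightarrow> real) set)})"

definition Uspace :: "nat \<Rightarrow> nat \<Rightarrow> (real^'n \<Rightarrow> real \<Rightarrow> real) set" where
  "Uspace n s = lin_span (
      {(\<lambda>x t. Y x) | Y. Y \<in> (harm n :: (real^'n \<Rightarrow> real) set)}
    \<union> (\<Union>j\<in>{1..min (s - 1) n}.
        {(\<lambda>x t. jacobiP j (2 * real n - 2 * real j + real CARD('n) - 2) (- real s) (1 - 2 * t) * Y x)
           | Y. Y \<in> (harm (n - j) :: (real^'n \<Rightarrow> real) set)})
    \<union> (if s \<le> n then {(\<lambda>x t. (1 - t) ^ s * g x t) | g. g \<in> Vspace (n - s) (real s)}
       else {\<lambda>x t. 0}))"

text \<open>The operator D_gamma acting on the restriction to the cone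
  F(t,xi) = f(t xi, t) of a function f(x,t).\<close>
definition Dop :: "real \<Rightarrow> (real^'n \<Rightarrow> real \<Rightarrow> real) \<Rightarrow> real \<Rightarrow> real^'n \<Rightarrow> real" where
  "Dop \<gamma> f t \<xi> =
     t * (1 - t) * deriv (deriv (\<lambda>\<tau>. f (\<tau> *\<^sub>R \<xi>) \<tau>)) t
   + (real CARD('n) - 1 - (real CARD('n) + \<gamma>) * t) * deriv (\<lambda>\<tau>. f (\<tau> *\<^sub>R \<xi>) \<tau>) t
   + (1 / t) * sphere_LB (\<lambda>\<eta>. f (t *\<^sub>R \<eta>) t) \<xi>"

end

theory Submission
  imports Defs "HOL-Computational_Algebra.Polynomial"
begin

lemma hom_poly_scale:
  assumes "hom_poly m (Y :: real^'n \<Rightarrow> real)"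
  shows "Y (c *\<^sub>R x) = c^m * Y x"
proof -
  obtain A co where A: "finite A" "\<forall>\<alpha>\<in>A. (\<Sum>i\<in>UNIV. \<alpha> i) = m"
    and Y: "Y = (\<lambda>x. \<Sum>\<alpha>\<in>A. co \<alpha> * (\<Prod>i\<in>UNIV. (x $ i) ^ (\<alpha> i)))"
    using assms unfolding hom_poly_def by blast
  have "Y (c *\<^sub>R x) = (\<Sum>\<alpha>\<in>A. co \<alpha> * (c ^ (\<Sum>i\<in>UNIV. \<alpha> i) * (\<Prod>i\<in>UNIV. (x $ i) ^ (\<alpha> i))))"
    unfolding Y by (simp add: power_mult_distrib prod.distrib power_sum)
  also have "\<dots> = (\<Sum>\<alpha>\<in>A. c^m * (co \<alpha> * (\<Prod>i\<in>UNIV. (x $ i) ^ (\<alpha> i))))"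
    using A(2) by (intro sum.cong) auto
  also have "\<dots> = c^m * Y x" unfolding Y by (simp add: sum_distrib_left)
  finally show ?thesis .
qed

lemma hom_poly_line:
  assumes "hom_poly m (Y :: real^'n \<Rightarrow> real)"
  shows "\<exists>p. \<forall>r. Y (a + r *\<^sub>R b) = poly p r"
proof -
  obtain A co where Y: "Y = (\<lambda>x. \<Sum>\<alpha>\<in>A. co \<alpha> * (\<Prod>i\<in>UNIV. (x $ i) ^ (\<alpha> i)))"
    using assms unfolding hom_poly_def by blast
  show ?thesis
    by (rule exI[of _ "\<Sum>\<alpha>\<in>A. smult (co \<alpha>) (\<Prod>i\<in>UNIV. [:a $ i, b $ i:] ^ (\<alpha> i))"])
       (simp add: Y poly_sum poly_prod poly_power algebra_simps)
qed

lemma hom_poly_euler: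
  assumes "hom_poly m (Y :: real^'n \<Rightarrow> real)"
  shows "(\<Sum>i\<in>UNIV. \<xi> $ i * deriv (\<lambda>r. Y (\<xi> + r *\<^sub>R axis i 1)) 0) = real m * Y \<xi>"
proof -
  obtain A co where A: "finite A" "\<forall>\<alpha>\<in>A. (\<Sum>i\<in>UNIV. \<alpha> i) = m"
    and Y: "Y = (\<lambda>x. \<Sum>\<alpha>\<in>A. co \<alpha> * (\<Prod>i\<in>UNIV. (x $ i) ^ (\<alpha> i)))"
    using assms unfolding hom_poly_def by blast
  define M where "M \<alpha> x = (\<Prod>i\<in>UNIV. (x $ i) ^ (\<alpha> i))" for \<alpha> :: "'n \<Rightarrow> nat" and x :: "real^'n"
  define R where "R \<alpha> i = (\<Prod>j\<in>UNIV-{i}. (\<xi> $ j) ^ (\<alpha> j))" for \<alpha> :: "'n \<Rightarrow> nat" and i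
  have split: "M \<alpha> (\<xi> + r *\<^sub>R axis i 1) = (\<xi> $ i + r) ^ \<alpha> i * R \<alpha> i" for \<alpha> i r
  proof -
    have "M \<alpha> (\<xi> + r *\<^sub>R axis i 1) = ((\<xi> + r *\<^sub>R axis i 1) $ i) ^ \<alpha> i *
        (\<Prod>j\<in>UNIV-{i}. ((\<xi> + r *\<^sub>R axis i 1) $ j) ^ (\<alpha> j))"
      unfolding M_def by (subst prod.remove[of UNIV i]) auto
    also have "(\<Prod>j\<in>UNIV-{i}. ((\<xi> + r *\<^sub>R axis i 1) $ j) ^ (\<alpha> j)) = R \<alpha> i"
      unfolding R_def by (intro prod.cong) (auto simp: axis_def)
    finally show ?thesis by (simp add: axis_def)
  qed
  have dM: "((\<lambda>r. M \<alpha> (\<xi> + r *\<^sub>R axis i 1)) has_real_derivative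
      real (\<alpha> i) * (\<xi> $ i) ^ (\<alpha> i - 1) * R \<alpha> i) (at 0)" for \<alpha> i
    unfolding split by (auto intro!: derivative_eq_intros)
  have eM: "\<xi> $ i * (real (\<alpha> i) * (\<xi> $ i) ^ (\<alpha> i - 1) * R \<alpha> i) = real (\<alpha> i) * M \<alpha> \<xi>" for \<alpha> i
  proof (cases "\<alpha> i")
    case (Suc k)
    have "M \<alpha> \<xi> = (\<xi> $ i) ^ \<alpha> i * R \<alpha> i" using split[of \<alpha> 0 i] by (simp add: M_def)
    then show ?thesis using Suc by simp
  qed simp
  have dY: "deriv (\<lambda>r. Y (\<xi> + r *\<^sub>R axis i 1)) 0 =
      (\<Sum>\<alpha>\<in>A. co \<alpha> * (real (\<alpha> i) * (\<xi> $ i) ^ (\<alpha> i - 1) * R \<alpha> i))" for i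
    apply (rule DERIV_imp_deriv)
    unfolding Y M_def[symmetric]
    by (auto intro!: derivative_eq_intros dM sum.cong)
  have "(\<Sum>i\<in>UNIV. \<xi> $ i * deriv (\<lambda>r. Y (\<xi> + r *\<^sub>R axis i 1)) 0)
      = (\<Sum>i\<in>UNIV. \<Sum>\<alpha>\<in>A. co \<alpha> * (real (\<alpha> i) * M \<alpha> \<xi>))"
    unfolding dY sum_distrib_left
  proof (intro sum.cong refl)
    fix i \<alpha>
    show "\<xi> $ i * (co \<alpha> * (real (\<alpha> i) * \<xi> $ i ^ (\<alpha> i - 1) * R \<alpha> i)) =
         co \<alpha> * (real (\<alpha> i) * M \<alpha> \<xi>)"
      using eM[of i \<alpha>] by (simp only: mult.left_commute[of "\<xi> $ i"])
  qed
  also have "\<dots> = (\<Sum>\<alpha>\<in>A. co \<alpha> * (real (\<Sum>i\<in>UNIV. \<alpha> i) * M \<alpha> \<xi>))"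
    by (subst sum.swap) (simp add: sum_distrib_left sum_distrib_right)
  also have "\<dots> = real m * Y \<xi>"
    using A(2) unfolding Y M_def by (simp add: sum_distrib_left algebra_simps)
  finally show ?thesis .
qed

lemma norm_line_sq:
  fixes \<xi> :: "real^'n"
  assumes "norm \<xi> = 1"
  shows "(norm (\<xi> + r *\<^sub>R axis i 1))^2 = 1 + 2 * r * \<xi> $ i + r^2"
proof -
  have "(norm (\<xi> + r *\<^sub>R axis i 1))^2 = inner (\<xi> + r *\<^sub>R axis i 1) (\<xi> + r *\<^sub>R axis i 1)"
    by (simp add: power2_norm_eq_inner)
  also have "\<dots> = inner \<xi> \<xi> + 2 * r * \<xi> $ i + r^2"
    by (simp add: inner_add_left inner_add_right inner_axis inner_axis' inner_axis_axis power2_eq_square algebra_simps)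
  also have "inner \<xi> \<xi> = 1" using assms by (simp add: power2_norm_eq_inner[symmetric])
  finally show ?thesis .
qed

lemma line_w_pos:
  fixes \<xi> :: "real^'n"
  assumes "norm \<xi> = 1" "\<bar>r\<bar> < 1"
  shows "1 + 2 * r * \<xi> $ i + r^2 > 0"
proof -
  have "\<bar>\<xi> $ i\<bar> \<le> 1" using component_le_norm_cart[of \<xi> i] assms by simp
  hence "\<bar>r * \<xi> $ i\<bar> \<le> \<bar>r\<bar>" by (simp add: abs_mult mult_left_le)
  hence "r * \<xi> $ i \<ge> - \<bar>r\<bar>" by linarith
  moreover have "(1 - \<bar>r\<bar>)^2 > 0" using assms by simp
  ultimately show ?thesis by (simp add: power2_eq_square algebra_simps abs_mult_self_eq) 
qed

lemma inv_sqrt_pow_powr: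
  assumes "w > 0"
  shows "(1 / sqrt w) ^ m = w powr (- (real m / 2))"
proof -
  have "1 / sqrt w = w powr (- (1/2))"
    using assms by (simp add: powr_half_sqrt[symmetric] powr_minus_divide)
  hence "(1 / sqrt w) ^ m = (w powr (- (1/2))) ^ m" by simp
  also have "\<dots> = w powr (real m * (- (1/2)))"
    using assms by (simp add: powr_realpow[symmetric] powr_powr)
  finally show ?thesis by simp
qed

lemma sphere_axis:
  assumes "hom_poly m (Y::real^'n\<Rightarrow>real)" "norm \<xi> = 1"
  shows "\<exists>\<phi>1. (\<forall>r\<in>ball 0 (1/2).
      ((\<lambda>r. Y ((1 / norm (\<xi> + r *\<^sub>R axis i 1)) *\<^sub>R (\<xi> + r *\<^sub>R axis i 1))) has_real_derivative \<phi>1 r) (at r))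
    \<and> (\<phi>1 has_real_derivative
        (deriv (deriv (\<lambda>r. Y (\<xi> + r *\<^sub>R axis i 1))) 0
         - 2 * real m * \<xi> $ i * deriv (\<lambda>r. Y (\<xi> + r *\<^sub>R axis i 1)) 0
         + Y \<xi> * (real m * (real m + 2) * (\<xi> $ i)^2 - real m))) (at 0)"
proof -
  obtain p where p: "\<And>r. Y (\<xi> + r *\<^sub>R axis i 1) = poly p r"
    using hom_poly_line[OF assms(1)] by blast
  have P: "(\<lambda>r. Y (\<xi> + r *\<^sub>R axis i 1)) = poly p" using p by auto
  have dP: "deriv (poly p) = poly (pderiv p)" for p :: "real poly"
    by (rule ext, rule DERIV_imp_deriv, rule poly_DERIV)
  define a where "a = \<xi> $ i"
  define w where "w r = 1 + 2 * r * a + r^2" for r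
  define e where "e = - (real m / 2)"
  have wpos: "w r > 0" if "\<bar>r\<bar> < 1" for r
    unfolding w_def a_def using line_w_pos[OF assms(2) that] .
  have Yline: "Y ((1 / norm (\<xi> + r *\<^sub>R axis i 1)) *\<^sub>R (\<xi> + r *\<^sub>R axis i 1))
      = poly p r * w r powr e" if "\<bar>r\<bar> < 1" for r
  proof -
    have "norm (\<xi> + r *\<^sub>R axis i 1) = sqrt (w r)"
      using norm_line_sq[OF assms(2), of r i] unfolding w_def a_def
      by (metis norm_ge_zero real_sqrt_abs real_sqrt_pow2_iff abs_of_nonneg real_sqrt_unique)
    thus ?thesis
      using hom_poly_scale[OF assms(1)] p inv_sqrt_pow_powr[OF wpos[OF that], of m]
      by (simp add: e_def)
  qed
  define \<phi>1 where "\<phi>1 r = poly (pderiv p) r * w r powr e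
     + poly p r * (e * w r powr (e - 1) * (2 * a + 2 * r))" for r
  have d1: "((\<lambda>r. poly p r * w r powr e) has_real_derivative \<phi>1 r) (at r)" if "\<bar>r\<bar> < 1" for r
    using wpos[OF that] unfolding \<phi>1_def w_def
    by (auto intro!: derivative_eq_intros simp: algebra_simps)
  have d2: "(\<phi>1 has_real_derivative
      (poly (pderiv (pderiv p)) 0 + 2 * poly (pderiv p) 0 * (e * (2 * a))
       + poly p 0 * (e * (e - 1) * (2 * a)^2 + e * 2))) (at 0)"
    using wpos[of 0] unfolding \<phi>1_def w_def
    by (auto intro!: derivative_eq_intros simp: algebra_simps power2_eq_square)
  show ?thesis
  proof (intro exI conjI ballI)
    fix r :: real assume "r \<in> ball 0 (1/2)"
    hence r: "\<bar>r\<bar> < 1" by simp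
    show "((\<lambda>r. Y ((1 / norm (\<xi> + r *\<^sub>R axis i 1)) *\<^sub>R (\<xi> + r *\<^sub>R axis i 1))) has_real_derivative \<phi>1 r) (at r)"
    proof (rule has_field_derivative_transform_within_open[OF d1[OF r], of "ball 0 1"])
      show "open (ball (0::real) 1)" by simp
      show "r \<in> ball 0 1" using r by simp
      fix x :: real assume "x \<in> ball 0 1"
      thus "poly p x * w x powr e = Y ((1 / norm (\<xi> + x *\<^sub>R axis i 1)) *\<^sub>R (\<xi> + x *\<^sub>R axis i 1))"
        using Yline[of x] by simp
    qed
  next
    show "(\<phi>1 has_real_derivative
        (deriv (deriv (\<lambda>r. Y (\<xi> + r *\<^sub>R axis i 1))) 0
         - 2 * real m * \<xi> $ i * deriv (\<lambda>r. Y (\<xi> + r *\<^sub>R axis i 1)) 0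
         + Y \<xi> * (real m * (real m + 2) * (\<xi> $ i)^2 - real m))) (at 0)"
      using d2 unfolding P dP p[of 0, simplified, symmetric]
      by (simp add: e_def a_def power2_eq_square algebra_simps)
  qed
qed

definition odeq :: "nat \<Rightarrow> real \<Rightarrow> real \<Rightarrow> nat \<Rightarrow> (real\<Rightarrow>real) \<Rightarrow> (real\<Rightarrow>real) \<Rightarrow> (real\<Rightarrow>real) \<Rightarrow> bool" where
  "odeq d \<gamma> lam m h h1 h2 \<longleftrightarrow> (\<forall>t. t * (t * (1 - t) * h2 t + (real d - 1 - (real d + \<gamma>) * t) * h1 t)
      - real m * (real m + real d - 2) * h t = lam * t * h t)"

definition gen :: "real \<Rightarrow> real \<Rightarrow> (real^'n \<Rightarrow> real \<Rightarrow> real) \<Rightarrow> bool" where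
  "gen \<gamma> lam g \<longleftrightarrow> (\<exists>m Y q h1 h2. Y \<in> harm m \<and> g = (\<lambda>x t. q t * Y x)
     \<and> (\<forall>\<tau>. ((\<lambda>\<tau>. q \<tau> * \<tau>^m) has_real_derivative h1 \<tau>) (at \<tau>))
     \<and> (\<forall>\<tau>. (h1 has_real_derivative h2 \<tau>) (at \<tau>))
     \<and> odeq CARD('n) \<gamma> lam m (\<lambda>\<tau>. q \<tau> * \<tau>^m) h1 h2)"

definition nice :: "real \<Rightarrow> real \<Rightarrow> (real^'n \<Rightarrow> real \<Rightarrow> real) \<Rightarrow> bool" where
  "nice \<gamma> lam Z \<longleftrightarrow> (\<forall>t \<xi>. 0 < t \<and> norm \<xi> = 1 \<longrightarrow> (\<exists>H1 H2 \<Phi>1 \<Phi>2.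
     (\<forall>\<tau>. ((\<lambda>\<tau>. Z (\<tau> *\<^sub>R \<xi>) \<tau>) has_real_derivative H1 \<tau>) (at \<tau>)) \<and>
     (\<forall>\<tau>. (H1 has_real_derivative H2 \<tau>) (at \<tau>)) \<and>
     (\<forall>i. \<forall>r\<in>ball 0 (1/2). ((\<lambda>r. Z (t *\<^sub>R ((1 / norm (\<xi> + r *\<^sub>R axis i 1)) *\<^sub>R (\<xi> + r *\<^sub>R axis i 1))) t)
         has_real_derivative \<Phi>1 i r) (at r)) \<and>
     (\<forall>i. (\<Phi>1 i has_real_derivative \<Phi>2 i) (at 0)) \<and>
     t * (1 - t) * H2 t + (real CARD('n) - 1 - (real CARD('n) + \<gamma>) * t) * H1 t
       + (1 / t) * (\<Sum>i\<in>UNIV. \<Phi>2 i) = lam * Z (t *\<^sub>R \<xi>) t))"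

lemma nice_Dop:
  fixes Z :: "real^'n \<Rightarrow> real \<Rightarrow> real"
  assumes "nice \<gamma> lam Z" "0 < t" "norm \<xi> = 1"
  shows "Dop \<gamma> Z t \<xi> = lam * Z (t *\<^sub>R \<xi>) t"
proof -
  obtain H1 H2 \<Phi>1 \<Phi>2 where
    h1: "\<forall>\<tau>. ((\<lambda>\<tau>. Z (\<tau> *\<^sub>R \<xi>) \<tau>) has_real_derivative H1 \<tau>) (at \<tau>)" and
    h2: "\<forall>\<tau>. (H1 has_real_derivative H2 \<tau>) (at \<tau>)" and
    p1: "\<forall>i. \<forall>r\<in>ball 0 (1/2). ((\<lambda>r. Z (t *\<^sub>R ((1 / norm (\<xi> + r *\<^sub>R axis i 1)) *\<^sub>R (\<xi> + r *\<^sub>R axis i 1))) t)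
         has_real_derivative \<Phi>1 i r) (at r)" and
    p2: "\<forall>i. (\<Phi>1 i has_real_derivative \<Phi>2 i) (at 0)" and
    eq: "t * (1 - t) * H2 t + (real CARD('n) - 1 - (real CARD('n) + \<gamma>) * t) * H1 t
       + (1 / t) * (\<Sum>i\<in>UNIV. \<Phi>2 i) = lam * Z (t *\<^sub>R \<xi>) t"
    using assms unfolding nice_def by blast
  have D1: "deriv (\<lambda>\<tau>. Z (\<tau> *\<^sub>R \<xi>) \<tau>) = H1"
    using h1 by (intro ext DERIV_imp_deriv) auto
  have D2: "deriv H1 t = H2 t" using h2 by (intro DERIV_imp_deriv) auto
  have L: "deriv (deriv (\<lambda>r. Z (t *\<^sub>R ((1 / norm (\<xi> + r *\<^sub>R axis i 1)) *\<^sub>R (\<xi> + r *\<^sub>R axis i 1))) t)) 0 = \<Phi>2 i" for i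
  proof -
    have "eventually (\<lambda>r. r \<in> ball (0::real) (1/2)) (nhds 0)"
      by (intro eventually_nhds_in_open) auto
    hence ev: "eventually (\<lambda>r. deriv (\<lambda>r. Z (t *\<^sub>R ((1 / norm (\<xi> + r *\<^sub>R axis i 1)) *\<^sub>R (\<xi> + r *\<^sub>R axis i 1))) t) r = \<Phi>1 i r) (nhds 0)"
      by eventually_elim (use p1 in \<open>auto intro: DERIV_imp_deriv\<close>)
    show ?thesis
      using deriv_cong_ev[OF ev refl] DERIV_imp_deriv[OF p2[rule_format, of i]] by simp
  qed
  show ?thesis
    unfolding Dop_def D1 D2 sphere_LB_def laplacian_def using L eq by simp
qed

lemma nice_zero: "nice \<gamma> lam (\<lambda>x t. 0)"
  unfolding nice_def
  by (intro allI impI exI[of _ "\<lambda>_. 0"] exI[of _ "\<lambda>_ _. 0"] conjI) auto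

lemma nice_add:
  fixes Z1 Z2 :: "real^'n \<Rightarrow> real \<Rightarrow> real"
  assumes "nice \<gamma> lam Z1" "nice \<gamma> lam Z2"
  shows "nice \<gamma> lam (\<lambda>x t. c * Z1 x t + Z2 x t)"
  unfolding nice_def
proof (intro allI impI)
  fix t :: real and \<xi> :: "real^'n" assume tx: "0 < t \<and> norm \<xi> = 1"
  obtain H1 H2 \<Phi>1 \<Phi>2 where
    h1: "\<forall>\<tau>. ((\<lambda>\<tau>. Z1 (\<tau> *\<^sub>R \<xi>) \<tau>) has_real_derivative H1 \<tau>) (at \<tau>)" and
    h2: "\<forall>\<tau>. (H1 has_real_derivative H2 \<tau>) (at \<tau>)" and
    p1: "\<forall>i. \<forall>r\<in>ball 0 (1/2). ((\<lambda>r. Z1 (t *\<^sub>R ((1 / norm (\<xi> + r *\<^sub>R axis i 1)) *\<^sub>R (\<xi> + r *\<^sub>R axis i 1))) t)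
         has_real_derivative \<Phi>1 i r) (at r)" and
    p2: "\<forall>i. (\<Phi>1 i has_real_derivative \<Phi>2 i) (at 0)" and
    eq: "t * (1 - t) * H2 t + (real CARD('n) - 1 - (real CARD('n) + \<gamma>) * t) * H1 t
       + (1 / t) * (\<Sum>i\<in>UNIV. \<Phi>2 i) = lam * Z1 (t *\<^sub>R \<xi>) t"
    using assms(1) tx unfolding nice_def by blast
  obtain G1 G2 \<Psi>1 \<Psi>2 where
    g1: "\<forall>\<tau>. ((\<lambda>\<tau>. Z2 (\<tau> *\<^sub>R \<xi>) \<tau>) has_real_derivative G1 \<tau>) (at \<tau>)" and
    g2: "\<forall>\<tau>. (G1 has_real_derivative G2 \<tau>) (at \<tau>)" and
    q1: "\<forall>i. \<forall>r\<in>ball 0 (1/2). ((\<lambda>r. Z2 (t *\<^sub>R ((1 / norm (\<xi> + r *\<^sub>R axis i 1)) *\<^sub>R (\<xi> + r *\<^sub>R axis i 1))) t)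
         has_real_derivative \<Psi>1 i r) (at r)" and
    q2: "\<forall>i. (\<Psi>1 i has_real_derivative \<Psi>2 i) (at 0)" and
    eq2: "t * (1 - t) * G2 t + (real CARD('n) - 1 - (real CARD('n) + \<gamma>) * t) * G1 t
       + (1 / t) * (\<Sum>i\<in>UNIV. \<Psi>2 i) = lam * Z2 (t *\<^sub>R \<xi>) t"
    using assms(2) tx unfolding nice_def by blast
  show "\<exists>H1 H2 \<Phi>1 \<Phi>2.
     (\<forall>\<tau>. ((\<lambda>\<tau>. c * Z1 (\<tau> *\<^sub>R \<xi>) \<tau> + Z2 (\<tau> *\<^sub>R \<xi>) \<tau>) has_real_derivative H1 \<tau>) (at \<tau>)) \<and>
     (\<forall>\<tau>. (H1 has_real_derivative H2 \<tau>) (at \<tau>)) \<and>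
     (\<forall>i. \<forall>r\<in>ball 0 (1/2). ((\<lambda>r. c * Z1 (t *\<^sub>R ((1 / norm (\<xi> + r *\<^sub>R axis i 1)) *\<^sub>R (\<xi> + r *\<^sub>R axis i 1))) t
           + Z2 (t *\<^sub>R ((1 / norm (\<xi> + r *\<^sub>R axis i 1)) *\<^sub>R (\<xi> + r *\<^sub>R axis i 1))) t)
         has_real_derivative \<Phi>1 i r) (at r)) \<and>
     (\<forall>i. (\<Phi>1 i has_real_derivative \<Phi>2 i) (at 0)) \<and>
     t * (1 - t) * H2 t + (real CARD('n) - 1 - (real CARD('n) + \<gamma>) * t) * H1 t
       + (1 / t) * (\<Sum>i\<in>UNIV. \<Phi>2 i) = lam * (c * Z1 (t *\<^sub>R \<xi>) t + Z2 (t *\<^sub>R \<xi>) t)"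
  proof (rule exI[of _ "\<lambda>\<tau>. c * H1 \<tau> + G1 \<tau>"], rule exI[of _ "\<lambda>\<tau>. c * H2 \<tau> + G2 \<tau>"],
      rule exI[of _ "\<lambda>i r. c * \<Phi>1 i r + \<Psi>1 i r"], rule exI[of _ "\<lambda>i. c * \<Phi>2 i + \<Psi>2 i"], intro conjI allI ballI)
    show "((\<lambda>\<tau>. c * Z1 (\<tau> *\<^sub>R \<xi>) \<tau> + Z2 (\<tau> *\<^sub>R \<xi>) \<tau>) has_real_derivative c * H1 \<tau> + G1 \<tau>) (at \<tau>)" for \<tau>
      using h1 g1 by (auto intro!: derivative_eq_intros)
    show "((\<lambda>\<tau>. c * H1 \<tau> + G1 \<tau>) has_real_derivative c * H2 \<tau> + G2 \<tau>) (at \<tau>)" for \<tau>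
      using h2 g2 by (auto intro!: derivative_eq_intros)
    show "((\<lambda>r. c * Z1 (t *\<^sub>R ((1 / norm (\<xi> + r *\<^sub>R axis i 1)) *\<^sub>R (\<xi> + r *\<^sub>R axis i 1))) t
           + Z2 (t *\<^sub>R ((1 / norm (\<xi> + r *\<^sub>R axis i 1)) *\<^sub>R (\<xi> + r *\<^sub>R axis i 1))) t)
         has_real_derivative c * \<Phi>1 i r + \<Psi>1 i r) (at r)" if "r \<in> ball 0 (1/2)" for i r
      using p1 q1 that by (intro DERIV_add DERIV_cmult) blast+
    show "((\<lambda>r. c * \<Phi>1 i r + \<Psi>1 i r) has_real_derivative c * \<Phi>2 i + \<Psi>2 i) (at 0)" for i
      using p2 q2 by (auto intro!: derivative_eq_intros)
    show "t * (1 - t) * (c * H2 t + G2 t) + (real CARD('n) - 1 - (real CARD('n) + \<gamma>) * t) * (c * H1 t + G1 t)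
       + (1 / t) * (\<Sum>i\<in>UNIV. c * \<Phi>2 i + \<Psi>2 i) = lam * (c * Z1 (t *\<^sub>R \<xi>) t + Z2 (t *\<^sub>R \<xi>) t)"
    proof -
      have "(\<Sum>i\<in>UNIV. c * \<Phi>2 i + \<Psi>2 i) = c * (\<Sum>i\<in>UNIV. \<Phi>2 i) + (\<Sum>i\<in>UNIV. \<Psi>2 i)"
        by (simp add: sum.distrib sum_distrib_left)
      thus ?thesis using arg_cong2[where f="\<lambda>a b. c * a + b", OF eq eq2]
        by (simp add: algebra_simps)
    qed
  qed
qed

lemma nice_sum:
  fixes F :: "'a \<Rightarrow> real^'n \<Rightarrow> real \<Rightarrow> real"
  assumes "finite A" "\<And>a. a \<in> A \<Longrightarrow> nice \<gamma> lam (F a)"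
  shows "nice \<gamma> lam (\<lambda>x t. \<Sum>a\<in>A. c a * F a x t)"
  using assms
proof (induction A rule: finite_induct)
  case empty
  then show ?case using nice_zero by simp
next
  case (insert a A)
  have "nice \<gamma> lam (\<lambda>x t. c a * F a x t + (\<Sum>a\<in>A. c a * F a x t))"
    using insert by (intro nice_add) auto
  then show ?case using insert by simp
qed

lemma sum_sq_norm1:
  fixes \<xi> :: "real^'n"
  assumes "norm \<xi> = 1"
  shows "(\<Sum>i\<in>UNIV. (\<xi> $ i)^2) = 1"
proof -
  have "inner \<xi> \<xi> = 1" using assms by (simp add: power2_norm_eq_inner[symmetric])
  thus ?thesis by (simp add: inner_vec_def power2_eq_square)
qed

lemma gen_nice:
  fixes g :: "real^'n \<Rightarrow> real \<Rightarrow> real"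
  assumes "gen \<gamma> lam g"
  shows "nice \<gamma> lam g"
proof -
  obtain m Y q h1 h2 where Y: "Y \<in> harm m" and g: "g = (\<lambda>x t. q t * Y x)"
    and d1: "\<forall>\<tau>. ((\<lambda>\<tau>. q \<tau> * \<tau>^m) has_real_derivative h1 \<tau>) (at \<tau>)"
    and d2: "\<forall>\<tau>. (h1 has_real_derivative h2 \<tau>) (at \<tau>)"
    and ode: "odeq CARD('n) \<gamma> lam m (\<lambda>\<tau>. q \<tau> * \<tau>^m) h1 h2"
    using assms unfolding gen_def by blast
  have hp: "hom_poly m Y" and harmY: "\<And>x. laplacian Y x = 0" using Y unfolding harm_def by auto
  define d where "d = real CARD('n)"
  show ?thesis
    unfolding nice_def
  proof (intro allI impI)
    fix t :: real and \<xi> :: "real^'n" assume tx: "0 < t \<and> norm \<xi> = 1"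
    hence t: "0 < t" and xi: "norm \<xi> = 1" by auto
    define D1 where "D1 i = deriv (\<lambda>r. Y (\<xi> + r *\<^sub>R axis i 1)) 0" for i
    define D2 where "D2 i = deriv (deriv (\<lambda>r. Y (\<xi> + r *\<^sub>R axis i 1))) 0" for i
    define K where "K = q t * t^m"
    have "\<forall>i. \<exists>\<phi>1. (\<forall>r\<in>ball 0 (1/2).
      ((\<lambda>r. Y ((1 / norm (\<xi> + r *\<^sub>R axis i 1)) *\<^sub>R (\<xi> + r *\<^sub>R axis i 1))) has_real_derivative \<phi>1 r) (at r))
      \<and> (\<phi>1 has_real_derivative
        (D2 i - 2 * real m * \<xi> $ i * D1 i + Y \<xi> * (real m * (real m + 2) * (\<xi> $ i)^2 - real m))) (at 0)"
      unfolding D1_def D2_def using sphere_axis[OF hp xi] by blast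
    from choice[OF this] obtain \<phi>1 where \<phi>1a: "\<forall>i. (\<forall>r\<in>ball 0 (1/2).
      ((\<lambda>r. Y ((1 / norm (\<xi> + r *\<^sub>R axis i 1)) *\<^sub>R (\<xi> + r *\<^sub>R axis i 1))) has_real_derivative \<phi>1 i r) (at r))
      \<and> (\<phi>1 i has_real_derivative
        (D2 i - 2 * real m * \<xi> $ i * D1 i + Y \<xi> * (real m * (real m + 2) * (\<xi> $ i)^2 - real m))) (at 0)"
      by blast
    note \<phi>1 = \<phi>1a[rule_format]
    have sumD2: "(\<Sum>i\<in>UNIV. D2 i) = 0" using harmY[of \<xi>] unfolding laplacian_def D2_def .
    have sumD1: "(\<Sum>i\<in>UNIV. \<xi> $ i * D1 i) = real m * Y \<xi>" unfolding D1_def using hom_poly_euler[OF hp] .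
    have sumsq: "(\<Sum>i\<in>UNIV. (\<xi> $ i)^2) = 1" using sum_sq_norm1[OF xi] .
    have sumPhi: "(\<Sum>i\<in>UNIV. K * (D2 i - 2 * real m * \<xi> $ i * D1 i + Y \<xi> * (real m * (real m + 2) * (\<xi> $ i)^2 - real m)))
        = - K * real m * (real m + d - 2) * Y \<xi>"
    proof -
      have "(\<Sum>i\<in>UNIV. K * (D2 i - 2 * real m * \<xi> $ i * D1 i + Y \<xi> * (real m * (real m + 2) * (\<xi> $ i)^2 - real m)))
         = K * ((\<Sum>i\<in>UNIV. D2 i) - 2 * real m * (\<Sum>i\<in>UNIV. \<xi> $ i * D1 i)
             + Y \<xi> * real m * (real m + 2) * (\<Sum>i\<in>UNIV. (\<xi> $ i)^2) - Y \<xi> * real m * d)"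
      proof -
        have pt: "K * (D2 i - 2 * real m * \<xi> $ i * D1 i + Y \<xi> * (real m * (real m + 2) * (\<xi> $ i)^2 - real m))
          = K * D2 i - (2 * real m * K) * (\<xi> $ i * D1 i) + (K * Y \<xi> * real m * (real m + 2)) * (\<xi> $ i)^2
            - K * Y \<xi> * real m" for i
          by (simp add: algebra_simps)
        have "(\<Sum>i\<in>UNIV. K * (D2 i - 2 * real m * \<xi> $ i * D1 i + Y \<xi> * (real m * (real m + 2) * (\<xi> $ i)^2 - real m)))
          = (\<Sum>i\<in>UNIV. K * D2 i - (2 * real m * K) * (\<xi> $ i * D1 i) + (K * Y \<xi> * real m * (real m + 2)) * (\<xi> $ i)^2
            - K * Y \<xi> * real m)" unfolding pt ..
        also have "\<dots> = K * (\<Sum>i\<in>UNIV. D2 i) - (2 * real m * K) * (\<Sum>i\<in>UNIV. \<xi> $ i * D1 i)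
           + (K * Y \<xi> * real m * (real m + 2)) * (\<Sum>i\<in>UNIV. (\<xi> $ i)^2) - d * (K * Y \<xi> * real m)"
          by (simp only: sum.distrib sum_subtractf sum_distrib_left[symmetric] sum_constant d_def) simp
        finally show ?thesis by (simp add: algebra_simps)
      qed
      also have "\<dots> = - K * real m * (real m + d - 2) * Y \<xi>"
        unfolding sumD2 sumD1 sumsq by (simp add: algebra_simps)
      finally show ?thesis .
    qed
    have odet: "t * (t * (1 - t) * h2 t + (d - 1 - (d + \<gamma>) * t) * h1 t)
      - real m * (real m + d - 2) * K = lam * t * K"
      using ode unfolding odeq_def K_def d_def by blast
    show "\<exists>H1 H2 \<Phi>1 \<Phi>2.
     (\<forall>\<tau>. ((\<lambda>\<tau>. g (\<tau> *\<^sub>R \<xi>) \<tau>) has_real_derivative H1 \<tau>) (at \<tau>)) \<and>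
     (\<forall>\<tau>. (H1 has_real_derivative H2 \<tau>) (at \<tau>)) \<and>
     (\<forall>i. \<forall>r\<in>ball 0 (1/2). ((\<lambda>r. g (t *\<^sub>R ((1 / norm (\<xi> + r *\<^sub>R axis i 1)) *\<^sub>R (\<xi> + r *\<^sub>R axis i 1))) t)
         has_real_derivative \<Phi>1 i r) (at r)) \<and>
     (\<forall>i. (\<Phi>1 i has_real_derivative \<Phi>2 i) (at 0)) \<and>
     t * (1 - t) * H2 t + (real CARD('n) - 1 - (real CARD('n) + \<gamma>) * t) * H1 t
       + (1 / t) * (\<Sum>i\<in>UNIV. \<Phi>2 i) = lam * g (t *\<^sub>R \<xi>) t"
    proof (rule exI[of _ "\<lambda>\<tau>. h1 \<tau> * Y \<xi>"], rule exI[of _ "\<lambda>\<tau>. h2 \<tau> * Y \<xi>"],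
      rule exI[of _ "\<lambda>i r. K * \<phi>1 i r"],
      rule exI[of _ "\<lambda>i. K * (D2 i - 2 * real m * \<xi> $ i * D1 i + Y \<xi> * (real m * (real m + 2) * (\<xi> $ i)^2 - real m))"],
      intro conjI allI ballI)
      fix \<tau> :: real
      have "(\<lambda>\<tau>. g (\<tau> *\<^sub>R \<xi>) \<tau>) = (\<lambda>\<tau>. (q \<tau> * \<tau>^m) * Y \<xi>)"
        unfolding g by (simp add: hom_poly_scale[OF hp] mult.assoc)
      thus "((\<lambda>\<tau>. g (\<tau> *\<^sub>R \<xi>) \<tau>) has_real_derivative h1 \<tau> * Y \<xi>) (at \<tau>)"
        using d1 by (auto intro: DERIV_cmult_right)
      show "((\<lambda>\<tau>. h1 \<tau> * Y \<xi>) has_real_derivative h2 \<tau> * Y \<xi>) (at \<tau>)"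
        using d2 by (auto intro: DERIV_cmult_right)
    next
      fix i and r :: real assume r: "r \<in> ball 0 (1/2)"
      have "(\<lambda>r. g (t *\<^sub>R ((1 / norm (\<xi> + r *\<^sub>R axis i 1)) *\<^sub>R (\<xi> + r *\<^sub>R axis i 1))) t)
          = (\<lambda>r. K * Y ((1 / norm (\<xi> + r *\<^sub>R axis i 1)) *\<^sub>R (\<xi> + r *\<^sub>R axis i 1)))"
        unfolding g K_def by (simp only: hom_poly_scale[OF hp] mult.assoc)
      thus "((\<lambda>r. g (t *\<^sub>R ((1 / norm (\<xi> + r *\<^sub>R axis i 1)) *\<^sub>R (\<xi> + r *\<^sub>R axis i 1))) t)
         has_real_derivative K * \<phi>1 i r) (at r)"
        using \<phi>1[of i] r by (auto intro: DERIV_cmult)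
    next
      fix i
      show "((\<lambda>r. K * \<phi>1 i r) has_real_derivative
        K * (D2 i - 2 * real m * \<xi> $ i * D1 i + Y \<xi> * (real m * (real m + 2) * (\<xi> $ i)^2 - real m))) (at 0)"
        using \<phi>1[of i] by (auto intro: DERIV_cmult)
    next
      have gt: "g (t *\<^sub>R \<xi>) t = K * Y \<xi>" unfolding g K_def by (simp add: hom_poly_scale[OF hp])
      have "t * (1 - t) * (h2 t * Y \<xi>) + (d - 1 - (d + \<gamma>) * t) * (h1 t * Y \<xi>)
          + (1 / t) * (- K * real m * (real m + d - 2) * Y \<xi>) = lam * (K * Y \<xi>)"
      proof -
        have "t * (1 - t) * h2 t + (d - 1 - (d + \<gamma>) * t) * h1 t
          - real m * (real m + d - 2) * K / t = lam * K"
          using odet t by (simp add: field_simps)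
        hence "(t * (1 - t) * h2 t + (d - 1 - (d + \<gamma>) * t) * h1 t
          - real m * (real m + d - 2) * K / t) * Y \<xi> = lam * K * Y \<xi>" by simp
        moreover have "t * (1 - t) * (h2 t * Y \<xi>) + (d - 1 - (d + \<gamma>) * t) * (h1 t * Y \<xi>)
          + (1 / t) * (- K * real m * (real m + d - 2) * Y \<xi>) = (t * (1 - t) * h2 t + (d - 1 - (d + \<gamma>) * t) * h1 t
          - real m * (real m + d - 2) * K / t) * Y \<xi>"
          using t by (simp add: field_simps)
        ultimately show ?thesis by simp
      qed
      thus "t * (1 - t) * (h2 t * Y \<xi>) + (real CARD('n) - 1 - (real CARD('n) + \<gamma>) * t) * (h1 t * Y \<xi>) +
        1 / t * (\<Sum>i\<in>UNIV. K * (D2 i - 2 * real m * \<xi> $ i * D1 i + Y \<xi> * (real m * (real m + 2) * (\<xi> $ i)^2 - real m))) =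
        lam * g (t *\<^sub>R \<xi>) t"
        unfolding sumPhi gt d_def .
    qed
  qed
qed

definition jc :: "nat \<Rightarrow> real \<Rightarrow> real \<Rightarrow> nat \<Rightarrow> real" where
  "jc j a b k = pochhammer (a + real k + 1) (j - k) * pochhammer (- real j) k
      * pochhammer (real j + a + b + 1) k / (fact j * fact k)"

lemma jc_rec:
  assumes "k < j"
  shows "jc j a b (Suc k) * real (Suc k) * (real k + a + 1)
       = jc j a b k * (real k - real j) * (real k + real j + a + b + 1)"
proof -
  have jk: "j - k = Suc (j - Suc k)" using assms by simp
  have p1: "pochhammer (a + real k + 1) (j - k) = (a + real k + 1) * pochhammer (a + real (Suc k) + 1) (j - Suc k)"
    unfolding jk pochhammer_rec by (simp add: add_ac)
  have p2: "pochhammer (- real j) (Suc k) = pochhammer (- real j) k * (real k - real j)"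
    by (simp add: pochhammer_Suc)
  have p3: "pochhammer (real j + a + b + 1) (Suc k) = pochhammer (real j + a + b + 1) k * (real k + real j + a + b + 1)"
    by (simp add: pochhammer_Suc algebra_simps)
  have f: "fact (Suc k) = real (Suc k) * (fact k :: real)" by simp
  have nz: "(fact j :: real) \<noteq> 0" "(fact k :: real) \<noteq> 0" by auto
  show ?thesis
    unfolding jc_def p1 p2 p3 f using nz by (simp add: field_simps add_ac del: of_nat_Suc)
qed

lemma jacobiP_sum: "jacobiP j a b (1 - 2 * t) = (\<Sum>k\<le>j. jc j a b k * t^k)"
  unfolding jacobiP_def jc_def by (simp add: atLeast0AtMost)

lemma jac_ode:
  fixes a b t :: real and j :: nat
  defines "y \<equiv> \<lambda>t. (\<Sum>k\<le>j. jc j a b k * t^k)"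
  defines "y1 \<equiv> \<lambda>t. (\<Sum>k<j. jc j a b (Suc k) * real (Suc k) * t^k)"
  defines "y2 \<equiv> \<lambda>t. (\<Sum>k<j. jc j a b (Suc k) * real (Suc k) * (real k * t^(k - 1)))"
  shows "(y has_real_derivative y1 t) (at t)"
    and "(y1 has_real_derivative y2 t) (at t)"
    and "t * (1 - t) * y2 t + (a + 1 - (a + b + 2) * t) * y1 t + real j * (real j + a + b + 1) * y t = 0"
proof -
  let ?c = "jc j a b"
  have "(y has_real_derivative (\<Sum>k\<le>j. ?c k * (real k * t^(k - 1)))) (at t)"
    unfolding y_def by (auto intro!: derivative_eq_intros sum.cong)
  moreover have "(\<Sum>k\<le>j. ?c k * (real k * t^(k - 1))) = y1 t"
    unfolding y1_def by (subst sum.atMost_shift) (simp add: mult.assoc)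
  ultimately show "(y has_real_derivative y1 t) (at t)" by simp
  show "(y1 has_real_derivative y2 t) (at t)"
    unfolding y1_def y2_def by (auto intro!: derivative_eq_intros sum.cong)
  have tk: "t * (real k * t^(k - 1)) = real k * t^k" for k
    by (cases k) auto
  have tk2: "t * (X * (real k * t^(k - 1))) = X * real k * t^k" for X k
    by (cases k) auto
  have ty2: "t * y2 t = (\<Sum>k<j. ?c (Suc k) * real (Suc k) * real k * t^k)"
    unfolding y2_def sum_distrib_left
    by (intro sum.cong refl) (simp only: tk2)
  define g where "g k = ?c k * real k * (real k + a + b + 1) * t^k" for k
  have S2: "(\<Sum>k<j. ?c (Suc k) * real (Suc k) * (real k + a + b + 2) * t^(Suc k)) = (\<Sum>k\<le>j. g k)"
    by (subst sum.atMost_shift) (simp add: g_def algebra_simps)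
  have S1: "(\<Sum>k<j. ?c (Suc k) * real (Suc k) * (real k + a + 1) * t^k)
      = (\<Sum>k\<le>j. ?c k * (real k - real j) * (real k + real j + a + b + 1) * t^k)"
  proof -
    have "(\<Sum>k<j. ?c (Suc k) * real (Suc k) * (real k + a + 1) * t^k)
        = (\<Sum>k<j. ?c k * (real k - real j) * (real k + real j + a + b + 1) * t^k)"
    proof (intro sum.cong refl)
      fix k assume "k \<in> {..<j}"
      hence "k < j" by simp
      from jc_rec[OF this, of a b]
      show "?c (Suc k) * real (Suc k) * (real k + a + 1) * t^k
          = ?c k * (real k - real j) * (real k + real j + a + b + 1) * t^k" by simp
    qed
    also have "\<dots> = (\<Sum>k\<le>j. ?c k * (real k - real j) * (real k + real j + a + b + 1) * t^k)"
      by (simp add: lessThan_Suc_atMost[symmetric])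
    finally show ?thesis .
  qed
  have E: "t * (1 - t) * y2 t + (a + 1 - (a + b + 2) * t) * y1 t
      = (\<Sum>k<j. ?c (Suc k) * real (Suc k) * (real k + a + 1) * t^k)
        - (\<Sum>k<j. ?c (Suc k) * real (Suc k) * (real k + a + b + 2) * t^(Suc k))"
  proof -
    have "t * (1 - t) * y2 t + (a + 1 - (a + b + 2) * t) * y1 t
        = (1 - t) * (t * y2 t) + (a + 1 - (a + b + 2) * t) * y1 t" by simp
    also have "\<dots> = (\<Sum>k<j. (1 - t) * (?c (Suc k) * real (Suc k) * real k * t^k)
        + (a + 1 - (a + b + 2) * t) * (?c (Suc k) * real (Suc k) * t^k))"
      unfolding ty2 y1_def by (simp only: sum_distrib_left sum.distrib)
    also have "\<dots> = (\<Sum>k<j. ?c (Suc k) * real (Suc k) * (real k + a + 1) * t^k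
        - ?c (Suc k) * real (Suc k) * (real k + a + b + 2) * t^(Suc k))"
      by (intro sum.cong refl) (simp add: algebra_simps)
    also have "\<dots> = (\<Sum>k<j. ?c (Suc k) * real (Suc k) * (real k + a + 1) * t^k)
        - (\<Sum>k<j. ?c (Suc k) * real (Suc k) * (real k + a + b + 2) * t^(Suc k))"
      by (rule sum_subtractf)
    finally show ?thesis .
  qed
  have "t * (1 - t) * y2 t + (a + 1 - (a + b + 2) * t) * y1 t + real j * (real j + a + b + 1) * y t
      = (\<Sum>k\<le>j. ?c k * (real k - real j) * (real k + real j + a + b + 1) * t^k - g k
           + real j * (real j + a + b + 1) * (?c k * t^k))"
    unfolding E S1 S2 y_def by (simp only: sum.distrib sum_subtractf sum_distrib_left)
  also have "\<dots> = 0"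
    by (intro sum.neutral ballI) (simp add: g_def algebra_simps)
  finally show "t * (1 - t) * y2 t + (a + 1 - (a + b + 2) * t) * y1 t + real j * (real j + a + b + 1) * y t = 0" .
qed

lemma jac_gen:
  fixes Y :: "real^'n \<Rightarrow> real" and \<gamma> :: real
  assumes "Y \<in> harm m"
  shows "gen \<gamma> (- (real m + real j) * (real m + real j + \<gamma> + real CARD('n) - 1))
     (\<lambda>x t. jacobiP j (2 * real m + real CARD('n) - 2) \<gamma> (1 - 2 * t) * Y x)"
proof -
  define d where "d = real CARD('n)"
  define a where "a = 2 * real m + d - 2"
  define y where "y = (\<lambda>t. (\<Sum>k\<le>j. jc j a \<gamma> k * t^k))"
  define y1 where "y1 = (\<lambda>t. (\<Sum>k<j. jc j a \<gamma> (Suc k) * real (Suc k) * t^k))"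
  define y2 where "y2 = (\<lambda>t. (\<Sum>k<j. jc j a \<gamma> (Suc k) * real (Suc k) * (real k * t^(k - 1))))"
  have Dy: "(y has_real_derivative y1 t) (at t)" for t
    unfolding y_def y1_def by (rule jac_ode(1))
  have Dy1: "(y1 has_real_derivative y2 t) (at t)" for t
    unfolding y1_def y2_def by (rule jac_ode(2))
  have E: "t * (1 - t) * y2 t + (a + 1 - (a + \<gamma> + 2) * t) * y1 t + real j * (real j + a + \<gamma> + 1) * y t = 0" for t
    unfolding y_def y1_def y2_def by (rule jac_ode(3))
  have q: "(\<lambda>t. jacobiP j (2 * real m + real CARD('n) - 2) \<gamma> (1 - 2 * t)) = y"
    unfolding y_def a_def d_def by (simp add: jacobiP_sum)
  have qq: "jacobiP j (2 * real m + real CARD('n) - 2) \<gamma> (1 - 2 * t) = y t" for t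
    using q by metis
  define h1 where "h1 \<tau> = y \<tau> * (real m * \<tau>^(m - Suc 0)) + y1 \<tau> * \<tau>^m" for \<tau>
  define h2 where "h2 \<tau> = (y \<tau> * (real m * (real (m - Suc 0) * \<tau>^(m - Suc 0 - Suc 0))) + y1 \<tau> * (real m * \<tau>^(m - Suc 0)))
     + (y1 \<tau> * (real m * \<tau>^(m - Suc 0)) + y2 \<tau> * \<tau>^m)" for \<tau>
  have d1: "((\<lambda>\<tau>. y \<tau> * \<tau>^m) has_real_derivative h1 \<tau>) (at \<tau>)" for \<tau>
    unfolding h1_def by (rule DERIV_mult'[OF Dy DERIV_pow])
  have d2: "(h1 has_real_derivative h2 \<tau>) (at \<tau>)" for \<tau>
    unfolding h1_def[abs_def] h2_def
    by (intro DERIV_add DERIV_mult' Dy Dy1 DERIV_cmult DERIV_pow)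
  have ode: "t * (t * (1 - t) * h2 t + (d - 1 - (d + \<gamma>) * t) * h1 t)
      - real m * (real m + d - 2) * (y t * t^m) = (- (real m + real j) * (real m + real j + \<gamma> + d - 1)) * t * (y t * t^m)" for t
  proof (cases m)
    case 0
    then show ?thesis using E[of t] unfolding h1_def h2_def a_def 0 by simp algebra
  next
    case (Suc m')
    show ?thesis
    proof (cases m')
      case 0
      then show ?thesis using E[of t] unfolding h1_def h2_def a_def \<open>m = Suc m'\<close> 0 by simp algebra
    next
      case (Suc k)
      have "t * (t * (1 - t) * h2 t + (d - 1 - (d + \<gamma>) * t) * h1 t)
        - real m * (real m + d - 2) * (y t * t^m) - (- (real m + real j) * (real m + real j + \<gamma> + d - 1)) * t * (y t * t^m)
        = t * t * t * t^k * (t * (1 - t) * y2 t + (a + 1 - (a + \<gamma> + 2) * t) * y1 t + real j * (real j + a + \<gamma> + 1) * y t)"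
        unfolding h1_def h2_def a_def \<open>m = Suc m'\<close> Suc by simp algebra
      then show ?thesis using E[of t] by simp
    qed
  qed
  show ?thesis
    unfolding gen_def q
    apply (rule exI[of _ m], rule exI[of _ Y], rule exI[of _ y], rule exI[of _ h1], rule exI[of _ h2])
    using assms d1 d2 ode unfolding odeq_def d_def by (auto simp: qq)
qed

lemma gen_shift:
  fixes g :: "real^'n \<Rightarrow> real \<Rightarrow> real"
  assumes "gen (real s) lam g" "s \<ge> 2"
  shows "gen (- real s) (lam - real s * (real CARD('n) - 1)) (\<lambda>x t. (1 - t)^s * g x t)"
proof -
  obtain m Y q h1 h2 where Y: "Y \<in> harm m" and g: "g = (\<lambda>x t. q t * Y x)"
    and d1: "\<And>\<tau>. ((\<lambda>\<tau>. q \<tau> * \<tau>^m) has_real_derivative h1 \<tau>) (at \<tau>)"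
    and d2: "\<And>\<tau>. (h1 has_real_derivative h2 \<tau>) (at \<tau>)"
    and ode: "odeq CARD('n) (real s) lam m (\<lambda>\<tau>. q \<tau> * \<tau>^m) h1 h2"
    using assms(1) unfolding gen_def by blast
  obtain k where s: "s = Suc (Suc k)" using assms(2) by (metis add_2_eq_Suc le_Suc_ex)
  define d where "d = real CARD('n)"
  define hh where "hh \<tau> = q \<tau> * \<tau>^m" for \<tau>
  define u where "u \<tau> = (1 - \<tau>)^s" for \<tau> :: real
  define u1 where "u1 \<tau> = - (real s * (1 - \<tau>)^(s - 1))" for \<tau> :: real
  define u2 where "u2 \<tau> = real s * (real (s - 1) * (1 - \<tau>)^(s - 2))" for \<tau> :: real
  have du: "(u has_real_derivative u1 \<tau>) (at \<tau>)" for \<tau>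
    unfolding u_def[abs_def] u1_def by (auto intro!: derivative_eq_intros)
  have du1: "(u1 has_real_derivative u2 \<tau>) (at \<tau>)" for \<tau>
  proof -
    have kk: "real k * x^(k - Suc 0) * x = real k * x^k" for x :: real by (cases k) auto
    show ?thesis
      unfolding u1_def[abs_def] u2_def s
      by (rule DERIV_cong, (rule derivative_eq_intros refl)+) (simp add: kk algebra_simps)
  qed
  define H1 where "H1 \<tau> = u \<tau> * h1 \<tau> + u1 \<tau> * hh \<tau>" for \<tau>
  define H2 where "H2 \<tau> = (u \<tau> * h2 \<tau> + u1 \<tau> * h1 \<tau>) + (u1 \<tau> * h1 \<tau> + u2 \<tau> * hh \<tau>)" for \<tau>
  have fn: "(\<lambda>\<tau>. (1 - \<tau>)^s * q \<tau> * \<tau>^m) = (\<lambda>\<tau>. u \<tau> * hh \<tau>)"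
    unfolding u_def hh_def by (simp add: mult.assoc)
  have D1: "((\<lambda>\<tau>. (1 - \<tau>)^s * q \<tau> * \<tau>^m) has_real_derivative H1 \<tau>) (at \<tau>)" for \<tau>
    unfolding fn H1_def using d1 unfolding hh_def[symmetric, abs_def]
    by (intro DERIV_mult'[OF du]) auto
  have D2: "(H1 has_real_derivative H2 \<tau>) (at \<tau>)" for \<tau>
    unfolding H1_def[abs_def] H2_def
    by (intro DERIV_add DERIV_mult' du du1 d2 d1[unfolded hh_def[symmetric, abs_def]])
  have odet: "t * (t * (1 - t) * h2 t + (d - 1 - (d + real s) * t) * h1 t) - real m * (real m + d - 2) * hh t
      - lam * t * hh t = 0" for t
    using ode unfolding odeq_def hh_def d_def by auto
  have new: "t * (t * (1 - t) * H2 t + (d - 1 - (d + - real s) * t) * H1 t) - real m * (real m + d - 2) * (u t * hh t)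
      = (lam - real s * (d - 1)) * t * (u t * hh t)" for t
  proof -
    have "t * (t * (1 - t) * H2 t + (d - 1 - (d + - real s) * t) * H1 t) - real m * (real m + d - 2) * (u t * hh t)
      - (lam - real s * (d - 1)) * t * (u t * hh t)
      = (1 - t) * (1 - t) * (1 - t)^k * (t * (t * (1 - t) * h2 t + (d - 1 - (d + real s) * t) * h1 t)
          - real m * (real m + d - 2) * hh t - lam * t * hh t)"
      unfolding H1_def H2_def u_def u1_def u2_def s by simp algebra
    thus ?thesis using odet[of t] by simp
  qed
  show ?thesis
    unfolding gen_def
    apply (rule exI[of _ m], rule exI[of _ Y], rule exI[of _ "\<lambda>\<tau>. (1 - \<tau>)^s * q \<tau>"],
      rule exI[of _ H1], rule exI[of _ H2])
    using Y D1 D2 new unfolding odeq_def d_def g u_def hh_def by (auto simp: mult.assoc)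
qed

lemma gen_cong: "gen \<gamma> l g \<Longrightarrow> l = l' \<Longrightarrow> g = g' \<Longrightarrow> gen \<gamma> l' g'"
  by simp

lemma lin_span_nice:
  fixes Z :: "real^'n \<Rightarrow> real \<Rightarrow> real"
  assumes "\<And>g. g \<in> S \<Longrightarrow> nice \<gamma> lam g" "Z \<in> lin_span S"
  shows "nice \<gamma> lam Z"
proof -
  obtain A c where A: "finite A" "A \<subseteq> S" and Z: "Z = (\<lambda>x t. \<Sum>g\<in>A. c g * g x t)"
    using assms(2) unfolding lin_span_def by blast
  show ?thesis unfolding Z
    using nice_sum[where F="\<lambda>g. g" and A=A and c=c] A assms(1) by blast
qed

theorem mainTheorem10:
  fixes Z :: "real^'n \<Rightarrow> real \<Rightarrow> real" and n s :: nat
  assumes "CARD('n) \<ge> 2" and "s \<ge> 2" and "Z \<in> Uspace n s"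
  shows "\<forall>t \<xi>. 0 < t \<and> t \<le> 1 \<and> norm \<xi> = 1 \<longrightarrow>
           Dop (- real s) Z t \<xi>
             = - (real n * (real n - real s + real CARD('n) - 1)) * Z (t *\<^sub>R \<xi>) t"
proof -
  define lam where "lam = - (real n * (real n - real s + real CARD('n) - 1))"
  have S1: "nice (- real s) lam g" if "g \<in> {(\<lambda>x t. Y x) | Y. Y \<in> (harm n :: (real^'n \<Rightarrow> real) set)}" for g
  proof -
    note gmem = that
    obtain Y where Y: "Y \<in> harm n" and g: "g = (\<lambda>x t. Y x)" using gmem by blast
    have "gen (- real s) lam g"
      by (rule gen_cong[OF jac_gen[OF Y, of "- real s" 0]]) (auto simp: lam_def g jacobiP_def algebra_simps)
    thus ?thesis by (rule gen_nice)
  qed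
  have S2: "nice (- real s) lam g" if "g \<in> (\<Union>j\<in>{1..min (s - 1) n}.
        {(\<lambda>x t. jacobiP j (2 * real n - 2 * real j + real CARD('n) - 2) (- real s) (1 - 2 * t) * Y x)
           | Y. Y \<in> (harm (n - j) :: (real^'n \<Rightarrow> real) set)})" for g
  proof -
    note gmem = that
    obtain j Y where j: "j \<in> {1..min (s - 1) n}" and Y: "Y \<in> harm (n - j)"
      and g: "g = (\<lambda>x t. jacobiP j (2 * real n - 2 * real j + real CARD('n) - 2) (- real s) (1 - 2 * t) * Y x)"
      using gmem by blast
    have jn: "j \<le> n" using j by simp
    have "gen (- real s) lam g"
      by (rule gen_cong[OF jac_gen[OF Y, of "- real s" j]]) (auto simp: lam_def g jn of_nat_diff algebra_simps)
    thus ?thesis by (rule gen_nice)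
  qed
  have S3: "nice (- real s) lam g" if "g \<in> (if s \<le> n then {(\<lambda>x t. (1 - t) ^ s * g x t) | g. g \<in> Vspace (n - s) (real s)}
       else {\<lambda>x t. 0})" for g :: "real^'n \<Rightarrow> real \<Rightarrow> real"
  proof (cases "s \<le> n")
    case False
    then show ?thesis using that nice_zero by auto
  next
    case True
    note gmem = that
    from True obtain g' :: "real^'n \<Rightarrow> real \<Rightarrow> real" where g': "g' \<in> Vspace (n - s) (real s)" and g: "g = (\<lambda>x t. (1 - t) ^ s * g' x t)"
      using gmem by auto
    obtain A c where A: "finite A"
      and Asub: "A \<subseteq> (\<Union>m\<in>{0..n - s}.
      {(\<lambda>x t. jacobiP (n - s - m) (2 * real m + real CARD('n) - 2) (real s) (1 - 2 * t) * Y x) | Y.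
         Y \<in> (harm m :: (real^'n \<Rightarrow> real) set)})"
      and g'A: "g' = (\<lambda>x t. \<Sum>h\<in>A. c h * h x t)"
      using g' unfolding Vspace_def lin_span_def by blast
    have geq: "g = (\<lambda>x t. \<Sum>h\<in>A. c h * ((1 - t) ^ s * h x t))"
      unfolding g g'A by (simp add: sum_distrib_left algebra_simps)
    have each: "nice (- real s) lam (\<lambda>x t. (1 - t) ^ s * h x t)" if "h \<in> A" for h
    proof -
      note hA = that
      obtain m Y where m: "m \<in> {0..n - s}" and Y: "Y \<in> harm m"
        and h: "h = (\<lambda>x t. jacobiP (n - s - m) (2 * real m + real CARD('n) - 2) (real s) (1 - 2 * t) * Y x)"
        using Asub hA by blast
      have mle: "m \<le> n - s" using m by simp
      have "gen (real s) (- (real m + real (n - s - m)) * (real m + real (n - s - m) + real s + real CARD('n) - 1)) h"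
        unfolding h by (rule jac_gen[OF Y])
      from gen_shift[OF this assms(2)]
      have "gen (- real s) lam (\<lambda>x t. (1 - t) ^ s * h x t)"
        by (rule gen_cong) (use mle True in \<open>auto simp: lam_def of_nat_diff algebra_simps\<close>)
      thus ?thesis by (rule gen_nice)
    qed
    show ?thesis unfolding geq
      by (rule nice_sum[OF A]) (rule each)
  qed
  have "nice (- real s) lam Z"
    by (rule lin_span_nice[OF _ assms(3)[unfolded Uspace_def]]) (use S1 S2 S3 in blast)
  thus ?thesis
    using nice_Dop[of "- real s" lam Z] unfolding lam_def by blast
qed

end
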